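(* Let $a,b\in\mathbb{Z}$ with $\gcd(a,b)=1$, and let $t$ be a positive integer. Then $$\#\{(x,y)\in \mathbb Z^2:\ ax+by\in [1,t(a^2+b^2)-1] \text{ and } ay-bx \in [1,t(a^2+b^2)-1] \}=(a^2+b^2)t^2-2t+1.$$
   Context: Here $[m,M]$ denotes the closed real interval, so the conditions say $1\le ax+by\le t(a^2+b^2)-1$ and $1\le ay-bx\le t(a^2+b^2)-1$. *)

theory Defs
  imports Main
begin

end

theory Submission
  imports Defs
begin


lemma count_res:
  fixes n t r :: int
  assumes n: "n > 0" and t: "t > 0" and r: "0 \<le> r" "r < n"
  shows "int (card {v \<in> {1..t*n-1}. v mod n = r}) = (if r = 0 then t-1 else t)"
proof -
  define l where "l = (if r = 0 then 1 else (0::int))"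
  have eq: "{v \<in> {1..t*n-1}. v mod n = r} = (\<lambda>k. k*n + r) ` {l..<t}"
  proof (rule set_eqI, rule iffI)
    fix v assume "v \<in> {v \<in> {1..t*n-1}. v mod n = r}"
    hence v: "1 \<le> v" "v \<le> t*n-1" "v mod n = r" by auto
    define k where "k = v div n"
    have vk: "v = k*n + r" using v(3) k_def by (metis div_mult_mod_eq)
    have "k*n < t*n" using vk v(2) r by linarith
    hence "k < t" using n by simp
    moreover have "l \<le> k"
    proof (cases "r = 0")
      case True
      hence "0 < k*n" using vk v(1) by simp
      hence "0 < k" using n by (simp add: zero_less_mult_iff)
      thus ?thesis using True l_def by simp
    next
      case False
      have "-1*n < k*n" using vk v(1) r by linarith
      hence "-1 < k" using n by (meson mult_less_cancel_right_pos)
      thus ?thesis using False l_def by simp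
    qed
    ultimately show "v \<in> (\<lambda>k. k*n + r) ` {l..<t}" using vk by auto
  next
    fix v assume "v \<in> (\<lambda>k. k*n + r) ` {l..<t}"
    then obtain k where k: "l \<le> k" "k < t" "v = k*n + r" by auto
    have "k + 1 \<le> t" using k by simp
    hence "(k+1)*n \<le> t*n" using n by (simp add: mult_right_mono)
    hence "v \<le> t*n - 1" using k r by (simp add: algebra_simps)
    moreover have "1 \<le> v"
    proof (cases "r = 0")
      case True
      hence "1 \<le> k" using k l_def by simp
      hence "1*n \<le> k*n" using n by (simp add: mult_right_mono)
      thus ?thesis using k True n by linarith
    next
      case False
      hence "0 \<le> k" using k l_def by simp
      hence "0 \<le> k*n" using n by simp
      thus ?thesis using k False r by simp
    qed
    moreover have "v mod n = r" using k r by simp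
    ultimately show "v \<in> {v \<in> {1..t*n-1}. v mod n = r}" by auto
  qed
  have inj: "inj_on (\<lambda>k. k*n + r) {l..<t}" using n by (intro inj_onI) simp
  have "card {v \<in> {1..t*n-1}. v mod n = r} = card {l..<t}"
    using eq card_image[OF inj] by simp
  moreover have "card {l..<t} = nat (t - l)" by (rule card_atLeastLessThan_int)
  moreover have "t - l = (if r = 0 then t-1 else t)" unfolding l_def by simp
  moreover have "t - l \<ge> 0" using t unfolding l_def by simp
  ultimately show ?thesis by (metis nat_0_le)
qed


lemma count_lin:
  fixes n t b w :: int
  assumes n: "n > 0" and t: "t > 0" and cop: "coprime b n"
  shows "int (card {v \<in> {1..t*n-1}. n dvd w - b*v}) = (if n dvd w then t-1 else t)"
proof -
  obtain s k where sk: "s*b + k*n = 1" using bezout_int[of b n] cop by auto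
  define r where "r = (w*s) mod n"
  have modiff: "v mod n = r \<longleftrightarrow> n dvd w*s - v" for v
  proof -
    have "v mod n = r \<longleftrightarrow> (w*s) mod n = v mod n" unfolding r_def by auto
    also have "... \<longleftrightarrow> n dvd w*s - v" by (rule mod_eq_dvd_iff)
    finally show ?thesis .
  qed
  have iff: "n dvd w - b*v \<longleftrightarrow> v mod n = r" for v
  proof
    assume "n dvd w - b*v"
    then obtain m where m: "w - b*v = n*m" by (auto elim: dvdE)
    have e: "s*b - 1 = -(k*n)" using sk by linarith
    have "w*s - v = (w - b*v)*s + v*(s*b - 1)" by (simp add: algebra_simps)
    also have "... = n*(m*s - v*k)" unfolding m e by (simp add: algebra_simps)
    finally have "n dvd w*s - v" by (rule dvdI)
    thus "v mod n = r" using modiff by blast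
  next
    assume "v mod n = r"
    hence "n dvd w*s - v" using modiff by blast
    then obtain m where m: "w*s - v = n*m" by (auto elim: dvdE)
    have e: "1 - s*b = k*n" using sk by linarith
    have "w - b*v = b*(w*s - v) + w*(1 - s*b)" by (simp add: algebra_simps)
    also have "... = n*(b*m + w*k)" unfolding m e by (simp add: algebra_simps)
    finally show "n dvd w - b*v" by (rule dvdI)
  qed
  have r0: "r = 0 \<longleftrightarrow> n dvd w"
  proof
    assume "r = 0"
    hence "n dvd w*s" unfolding r_def by auto
    then obtain m where m: "w*s = n*m" by (auto elim: dvdE)
    have e: "1 - s*b = k*n" using sk by linarith
    have "w = w*s*b + w*(1 - s*b)" by (simp add: algebra_simps)
    also have "... = n*(m*b + w*k)" unfolding m e by (simp add: algebra_simps)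
    finally show "n dvd w" by (rule dvdI)
  next
    assume "n dvd w" thus "r = 0" unfolding r_def by simp
  qed
  have rr: "0 \<le> r" "r < n" unfolding r_def using n by auto
  have "{v \<in> {1..t*n-1}. n dvd w - b*v} = {v \<in> {1..t*n-1}. v mod n = r}" using iff by auto
  hence "int (card {v \<in> {1..t*n-1}. n dvd w - b*v}) = (if r = 0 then t-1 else t)"
    using count_res[OF n t rr] by simp
  thus ?thesis using r0 by simp
qed

theorem proposition2p1:
  fixes a b t :: int
  assumes "gcd a b = 1" and "t > 0"
  shows "int (card {(x::int, y::int).
            1 \<le> a * x + b * y \<and> a * x + b * y \<le> t * (a^2 + b^2) - 1 \<and>
            1 \<le> a * y - b * x \<and> a * y - b * x \<le> t * (a^2 + b^2) - 1})
         = (a^2 + b^2) * t^2 - 2 * t + 1"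
proof -
  define n where "n = a^2 + b^2"
  define N where "N = t*n - 1"
  let ?S = "{(x::int, y::int).
            1 \<le> a * x + b * y \<and> a * x + b * y \<le> t * (a^2 + b^2) - 1 \<and>
            1 \<le> a * y - b * x \<and> a * y - b * x \<le> t * (a^2 + b^2) - 1}"
  define S' where "S' = Sigma {1..N} (\<lambda>u. {v \<in> {1..N}. n dvd a*u - b*v})"
  define f where "f = (\<lambda>(x::int, y::int). (a*x + b*y, a*y - b*x))"
  have cab: "coprime a b" using assms(1) by (simp add: coprime_iff_gcd_eq_1)
  have npos: "n > 0"
  proof -
    have "a \<noteq> 0 \<or> b \<noteq> 0" using assms(1) by auto
    thus ?thesis unfolding n_def by (simp add: sum_power2_gt_zero_iff)
  qed
  have cbn: "coprime b n"
  proof -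
    have "n = b * b + a^2" unfolding n_def by (simp add: power2_eq_square)
    hence "gcd b n = gcd b (a^2)" using gcd_add_mult[of b b "a^2"] by simp
    moreover have "coprime b (a^2)" using cab by (simp add: coprime_commute)
    ultimately show ?thesis by (simp add: coprime_iff_gcd_eq_1)
  qed
  have can: "coprime a n"
  proof -
    have "n = a * a + b^2" unfolding n_def by (simp add: power2_eq_square)
    hence "gcd a n = gcd a (b^2)" using gcd_add_mult[of a a "b^2"] by simp
    moreover have "coprime a (b^2)" using cab by simp
    ultimately show ?thesis by (simp add: coprime_iff_gcd_eq_1)
  qed
  have inj: "inj_on f ?S"
  proof (rule inj_onI)
    fix p q assume "p \<in> ?S" "q \<in> ?S" "f p = f q"
    obtain x y where p: "p = (x,y)" by (cases p)
    obtain x' y' where q: "q = (x',y')" by (cases q)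
    have e1: "a*x + b*y = a*x' + b*y'" and e2: "a*y - b*x = a*y' - b*x'"
      using \<open>f p = f q\<close> unfolding p q f_def by auto
    have "n*x = a*(a*x + b*y) - b*(a*y - b*x)" unfolding n_def by (simp add: algebra_simps power2_eq_square)
    also have "... = n*x'" unfolding e1 e2 n_def by (simp add: algebra_simps power2_eq_square)
    finally have "x = x'" using npos by simp
    have "n*y = b*(a*x + b*y) + a*(a*y - b*x)" unfolding n_def by (simp add: algebra_simps power2_eq_square)
    also have "... = n*y'" unfolding e1 e2 n_def by (simp add: algebra_simps power2_eq_square)
    finally have "y = y'" using npos by simp
    show "p = q" using p q \<open>x = x'\<close> \<open>y = y'\<close> by simp
  qed
  have img: "f ` ?S = S'"
  proof (rule set_eqI, rule iffI)
    fix z assume "z \<in> f ` ?S"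
    then obtain x y where xy: "(x,y) \<in> ?S" "z = f (x,y)" by auto
    have "a*(a*x + b*y) - b*(a*y - b*x) = n*x" unfolding n_def by (simp add: algebra_simps power2_eq_square)
    hence "n dvd a*(a*x + b*y) - b*(a*y - b*x)" by (metis dvd_triv_left)
    thus "z \<in> S'" using xy unfolding S'_def f_def N_def n_def by auto
  next
    fix z assume "z \<in> S'"
    then obtain u v where z: "z = (u,v)" "u \<in> {1..N}" "v \<in> {1..N}" "n dvd a*u - b*v"
      unfolding S'_def by auto
    obtain x where x: "a*u - b*v = n*x" using z(4) by (auto elim: dvdE)
    have "b*(b*u + a*v) = n*u - a*(a*u - b*v)" unfolding n_def by (simp add: algebra_simps power2_eq_square)
    also have "... = n*(u - a*x)" unfolding x by (simp add: algebra_simps)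
    finally have "n dvd b*(b*u + a*v)" by (rule dvdI)
    hence "n dvd b*u + a*v" using cbn by (metis coprime_commute coprime_dvd_mult_right_iff)
    then obtain y where y: "b*u + a*v = n*y" by (auto elim: dvdE)
    have "n*(a*x + b*y) = n*u"
    proof -
      have "n*(a*x + b*y) = a*(n*x) + b*(n*y)" by (simp add: algebra_simps)
      also have "... = n*u" unfolding x[symmetric] y[symmetric] by (simp add: n_def algebra_simps power2_eq_square)
      finally show ?thesis .
    qed
    hence u: "a*x + b*y = u" using npos by simp
    have "n*(a*y - b*x) = n*v"
    proof -
      have "n*(a*y - b*x) = a*(n*y) - b*(n*x)" by (simp add: algebra_simps)
      also have "... = n*v" unfolding x[symmetric] y[symmetric] by (simp add: n_def algebra_simps power2_eq_square)
      finally show ?thesis .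
    qed
    hence v: "a*y - b*x = v" using npos by simp
    have "(x,y) \<in> ?S" using z u v unfolding N_def n_def by auto
    moreover have "z = f (x,y)" using z u v unfolding f_def by simp
    ultimately show "z \<in> f ` ?S" by blast
  qed
  have "card ?S = card S'" using card_image[OF inj] img by simp
  also have "... = (\<Sum>u\<in>{1..N}. card {v \<in> {1..N}. n dvd a*u - b*v})"
    unfolding S'_def by (rule card_SigmaI) (auto intro: finite_subset[of _ "{1..N}"])
  finally have c1: "int (card ?S) = (\<Sum>u\<in>{1..N}. int (card {v \<in> {1..N}. n dvd a*u - b*v}))"
    by simp
  have "\<And>u. int (card {v \<in> {1..N}. n dvd a*u - b*v}) = t - (if n dvd u then 1 else 0)"
  proof -
    fix u
    have "n dvd a*u \<longleftrightarrow> n dvd u" using can by (metis coprime_commute coprime_dvd_mult_right_iff)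
    thus "int (card {v \<in> {1..N}. n dvd a*u - b*v}) = t - (if n dvd u then 1 else 0)"
      using count_lin[OF npos assms(2) cbn, of "a*u"] unfolding N_def by simp
  qed
  hence "int (card ?S) = (\<Sum>u\<in>{1..N}. t) - (\<Sum>u\<in>{1..N}. (if n dvd u then 1 else 0))"
    using c1 by (simp add: sum_subtractf)
  also have "(\<Sum>u\<in>{1..N}. (if n dvd u then 1 else 0::int)) = int (card {u \<in> {1..N}. n dvd u})"
  proof -
    have "{1..N} \<inter> Collect ((dvd) n) = {u \<in> {1..N}. n dvd u}" by auto
    thus ?thesis by (simp add: sum.If_cases)
  qed
  also have "int (card {u \<in> {1..N}. n dvd u}) = t - 1"
  proof -
    have "{u \<in> {1..N}. n dvd u} = {v \<in> {1..t*n-1}. n dvd 0 - 1*v}" unfolding N_def by auto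
    thus ?thesis using count_lin[OF npos assms(2), of 1 0] by simp
  qed
  also have "(\<Sum>u\<in>{1..N}. t) = N * t"
  proof -
    have "N \<ge> 0" unfolding N_def using npos assms(2) by (simp add: pos_add_strict mult_pos_pos)
    thus ?thesis by simp
  qed
  finally show ?thesis unfolding N_def n_def by (simp add: algebra_simps power2_eq_square)
qed

end
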